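(* Let $\mathcal P$ and $\mathrm{conv}(\mathcal P)$ be as in the context. Let $\alpha,\beta,s_{\max}$ be integers such that (a) $L\le s_{\max}\le\min\{T-2,\lfloor(\overline C-\overline V)/V\rfloor\}$, (b) $0\le\alpha<\beta\le s_{\max}$, and (c) $\beta=\alpha+1$ or $s_{\max}\le L+\alpha$. Let $\mathcal S=[0,\alpha]_{\mathbb Z}\cup[\beta,s_{\max}]_{\mathbb Z}$. For any $t\in[s_{\max}+2,T]_{\mathbb Z}$, the inequality $$x_t\le\overline C y_t-\sum_{s\in\mathcal S}(\overline C-\overline V-sV)(y_{t-s}-y_{t-s-1})$$ is valid and facet-defining for $\mathrm{conv}(\mathcal P)$. For any $t\in[1,T-s_{\max}-1]_{\mathbb Z}$, the inequality $$x_t\le\overline C y_t-\sum_{s\in\mathcal S}(\overline C-\overline V-sV)(y_{t+s}-y_{t+s+1})$$ is valid and facet-defining for $\mathrm{conv}(\mathcal P)$.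
   Context: For integers $a,b$, $[a,b]_{\mathbb Z}=\{a,a+1,\dots,b\}$ if $a\le b$ and $\emptyset$ otherwise. Fix a positive integer $T$, positive integers $L$ (minimum up time) and $\ell$ (minimum down time), and reals $\overline C,\underline C,V,\overline V$ with $\overline C>\underline C>0$, $V>0$, $\overline V+V\le\overline C$ and $\underline C<\overline V<\underline C+V$. $\mathcal P$ is the set of $(\mathbf x,\mathbf y)=((x_1,\dots,x_T),(y_1,\dots,y_T))\in\mathbb R_+^T\times\{0,1\}^T$ satisfying: (i) $-y_{t-1}+y_t-y_k\le 0$ for all $t\in[2,T]_{\mathbb Z}$, $k\in[t,\min\{T,t+L-1\}]_{\mathbb Z}$; (ii) $y_{t-1}-y_t+y_k\le 1$ for all $t\in[2,T]_{\mathbb Z}$, $k\in[t,\min\{T,t+\ell-1\}]_{\mathbb Z}$; (iii) $-x_t+\underline C y_t\le 0$ and $x_t-\overline C y_t\le 0$ for all $t\in[1,T]_{\mathbb Z}$; (iv) $x_t-x_{t-1}\le Vy_{t-1}+\overline V(1-y_{t-1})$ for all $t\in[2,T]_{\mathbb Z}$; (v) $x_{t-1}-x_t\le Vy_t+\overline V(1-y_t)$ for all $t\in[2,T]_{\mathbb Z}$. $\mathrm{conv}(\mathcal P)\subseteq\mathbb R^{2T}$ is its convex hull. A linear inequality is valid for $\mathrm{conv}(\mathcal P)$ if all its points satisfy it, and facet-defining if moreover the set of points of $\mathrm{conv}(\mathcal P)$ satisfying it with equality has dimension $\dim\mathrm{conv}(\mathcal P)-1$. *)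

theory Defs
  imports "HOL-Analysis.Analysis" "HOL-Library.Function_Algebras"
begin

instantiation "fun" :: (type, real_vector) real_vector
begin
definition scaleR_fun :: "real \<Rightarrow> ('a \<Rightarrow> 'b) \<Rightarrow> 'a \<Rightarrow> 'b" where
  "scaleR_fun r f = (\<lambda>x. r *\<^sub>R f x)"
instance by standard (auto simp: scaleR_fun_def fun_eq_iff scaleR_add_right scaleR_add_left)
end

text \<open>A point of R^(2T) is a pair (x, y) of functions on the index set nat, with
  x t = y t = 0 for t outside [1,T].\<close>
type_synonym pt = "(nat \<Rightarrow> real) \<times> (nat \<Rightarrow> real)"

definition inP :: "nat \<Rightarrow> nat \<Rightarrow> nat \<Rightarrow> real \<Rightarrow> real \<Rightarrow> real \<Rightarrow> real \<Rightarrow> pt \<Rightarrow> bool" where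
  "inP T L l Cb Cu V Vb p \<longleftrightarrow>
     (let x = fst p; y = snd p in
       (\<forall>t. t \<notin> {1..T} \<longrightarrow> x t = 0 \<and> y t = 0) \<and>
       (\<forall>t\<in>{1..T}. x t \<ge> 0 \<and> (y t = 0 \<or> y t = 1)) \<and>
       (\<forall>t\<in>{2..T}. \<forall>k\<in>{t..min T (t + L - 1)}. - y (t - 1) + y t - y k \<le> 0) \<and>
       (\<forall>t\<in>{2..T}. \<forall>k\<in>{t..min T (t + l - 1)}. y (t - 1) - y t + y k \<le> 1) \<and>
       (\<forall>t\<in>{1..T}. - x t + Cu * y t \<le> 0 \<and> x t - Cb * y t \<le> 0) \<and>
       (\<forall>t\<in>{2..T}. x t - x (t - 1) \<le> V * y (t - 1) + Vb * (1 - y (t - 1))) \<and>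
       (\<forall>t\<in>{2..T}. x (t - 1) - x t \<le> V * y t + Vb * (1 - y t)))"

definition Pset :: "nat \<Rightarrow> nat \<Rightarrow> nat \<Rightarrow> real \<Rightarrow> real \<Rightarrow> real \<Rightarrow> real \<Rightarrow> pt set" where
  "Pset T L l Cb Cu V Vb = {p. inP T L l Cb Cu V Vb p}"

definition affdim :: "'a::real_vector set \<Rightarrow> int" where
  "affdim S = (if S = {} then -1 else int (dim {a - b | a b. a \<in> S \<and> b \<in> S}))"

definition valid_ineq :: "'a::real_vector set \<Rightarrow> ('a \<Rightarrow> real) \<Rightarrow> ('a \<Rightarrow> real) \<Rightarrow> bool" where
  "valid_ineq K lhs rhs \<longleftrightarrow> (\<forall>p\<in>K. lhs p \<le> rhs p)"

definition facet_defining :: "'a::real_vector set \<Rightarrow> ('a \<Rightarrow> real) \<Rightarrow> ('a \<Rightarrow> real) \<Rightarrow> bool" where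
  "facet_defining K lhs rhs \<longleftrightarrow> valid_ineq K lhs rhs \<and>
     affdim {p\<in>K. lhs p = rhs p} = affdim K - 1"

end

theory Submission
  imports Defs
begin

definition ev :: "nat \<Rightarrow> nat \<Rightarrow> real" where "ev i = (\<lambda>k. if k = i then 1 else 0)"
definition exv :: "nat \<Rightarrow> pt" where "exv i = (ev i, 0)"
definition eyv :: "nat \<Rightarrow> pt" where "eyv i = (0, ev i)"
definition Wsp :: "nat \<Rightarrow> pt set" where
  "Wsp T = {p. \<forall>k. k \<notin> {1..T} \<longrightarrow> fst p k = 0 \<and> snd p k = 0}"

lemma fun_sum_apply: "(\<Sum>i\<in>A. f i) (x::'b) = (\<Sum>i\<in>A. (f i x :: 'c::comm_monoid_add))"
  by (induction A rule: infinite_finite_induct) auto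

lemma scaleR_fun_apply: "(r *\<^sub>R f) x = r *\<^sub>R f x"
  by (simp add: scaleR_fun_def)

lemma linear_fst_at: "linear (\<lambda>p::pt. fst p k)"
  by (rule linearI) (auto simp: scaleR_fun_def)

lemma linear_snd_at: "linear (\<lambda>p::pt. snd p k)"
  by (rule linearI) (auto simp: scaleR_fun_def)

lemma biorth:
  fixes v :: "'i \<Rightarrow> 'a::real_vector" and f :: "'i \<Rightarrow> 'a \<Rightarrow> real"
  assumes lin: "\<And>i. i \<in> I \<Longrightarrow> linear (f i)"
    and d: "\<And>i j. i \<in> I \<Longrightarrow> j \<in> I \<Longrightarrow> f i (v j) = (if i = j then 1 else 0)"
  shows "inj_on v I" "independent (v ` I)"
proof -
  show inj: "inj_on v I"
  proof (rule inj_onI)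
    fix i j assume "i \<in> I" "j \<in> I" "v i = v j"
    then have "f i (v i) = f i (v j)" by simp
    then show "i = j" using d[OF \<open>i\<in>I\<close> \<open>i\<in>I\<close>] d[OF \<open>i\<in>I\<close> \<open>j\<in>I\<close>]
      by (auto split: if_splits)
  qed
  show "independent (v ` I)"
    unfolding real_vector.dependent_def
  proof
    assume "\<exists>a\<in>v ` I. a \<in> span (v ` I - {a})"
    then obtain k where k: "k \<in> I" "v k \<in> span (v ` I - {v k})" by blast
    have "f k (v k) = 0"
    proof (rule real_vector.linear_eq_0_on_span[OF lin[OF k(1)] _ k(2)])
      fix x assume "x \<in> v ` I - {v k}"
      then obtain j where "j \<in> I" "x = v j" "j \<noteq> k" by auto
      then show "f k x = 0" using d[OF k(1), of j] by auto
    qed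
    then show False using d[OF k(1) k(1)] by simp
  qed
qed

lemma subspace_Wsp: "subspace (Wsp T)"
  unfolding subspace_def Wsp_def by (auto simp: scaleR_fun_def)

lemma decomp:
  assumes "d \<in> Wsp T"
  shows "d = (\<Sum>i\<in>{1..T}. fst d i *\<^sub>R exv i) + (\<Sum>j\<in>{1..T}. snd d j *\<^sub>R eyv j)"
proof (rule prod_eqI)
  show "fst d = fst ((\<Sum>i\<in>{1..T}. fst d i *\<^sub>R exv i) + (\<Sum>j\<in>{1..T}. snd d j *\<^sub>R eyv j))"
  proof
    fix k
    show "fst d k = fst ((\<Sum>i\<in>{1..T}. fst d i *\<^sub>R exv i) + (\<Sum>j\<in>{1..T}. snd d j *\<^sub>R eyv j)) k"
      using assms by (auto simp: fst_sum fun_sum_apply exv_def eyv_def ev_def scaleR_fun_def Wsp_def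
          if_distrib[of "\<lambda>x. _ * x"] sum.delta cong: if_cong)
  qed
  show "snd d = snd ((\<Sum>i\<in>{1..T}. fst d i *\<^sub>R exv i) + (\<Sum>j\<in>{1..T}. snd d j *\<^sub>R eyv j))"
  proof
    fix k
    show "snd d k = snd ((\<Sum>i\<in>{1..T}. fst d i *\<^sub>R exv i) + (\<Sum>j\<in>{1..T}. snd d j *\<^sub>R eyv j)) k"
      using assms by (auto simp: snd_sum fun_sum_apply exv_def eyv_def ev_def scaleR_fun_def Wsp_def
          if_distrib[of "\<lambda>x. _ * x"] sum.delta cong: if_cong)
  qed
qed

lemma g_decomp:
  assumes lin: "linear g" and t: "t \<in> {1..T}"
    and gx: "\<And>i. i \<in> {1..T} \<Longrightarrow> g (exv i) = (if i = t then 1 else 0)"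
    and d: "d \<in> Wsp T"
  shows "g d = fst d t + (\<Sum>j\<in>{1..T}. snd d j * g (eyv j))"
proof -
  have "g d = g ((\<Sum>i\<in>{1..T}. fst d i *\<^sub>R exv i) + (\<Sum>j\<in>{1..T}. snd d j *\<^sub>R eyv j))"
    using decomp[OF d] by simp
  also have "\<dots> = (\<Sum>i\<in>{1..T}. fst d i * g (exv i)) + (\<Sum>j\<in>{1..T}. snd d j * g (eyv j))"
    by (simp add: real_vector.linear_add[OF lin] real_vector.linear_sum[OF lin]
        real_vector.linear_scale[OF lin])
  also have "(\<Sum>i\<in>{1..T}. fst d i * g (exv i)) = (\<Sum>i\<in>{1..T}. if i = t then fst d i else 0)"
    by (rule sum.cong) (auto simp: gx)
  also have "\<dots> = fst d t" using t by (simp add: sum.delta')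
  finally show ?thesis .
qed

lemma dims:
  fixes K F :: "pt set" and g :: "pt \<Rightarrow> real"
  assumes T: "T > 0" and t: "t \<in> {1..T}" and lin: "linear g"
    and gx: "\<And>i. i \<in> {1..T} \<Longrightarrow> g (exv i) = (if i = t then 1 else 0)"
    and KW: "K \<subseteq> Wsp T" and FK: "F \<subseteq> K" and Fg: "\<And>p. p \<in> F \<Longrightarrow> g p = c"
    and Fne: "F \<noteq> {}"
    and hx: "\<And>i. i \<in> {1..T} \<Longrightarrow> i \<noteq> t \<Longrightarrow> exv i \<in> span {a - b |a b. a \<in> F \<and> b \<in> F}"
    and hxt: "exv t \<in> span {a - b |a b. a \<in> K \<and> b \<in> K}"
    and hy: "\<And>k. k \<in> {1..T} \<Longrightarrow> \<exists>d\<in>span {a - b |a b. a \<in> F \<and> b \<in> F}. snd d = ev k"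
  shows "affdim K = int (2*T)" "affdim F = int (2*T) - 1"
proof -
  define DF where "DF = {a - b |a b. a \<in> F \<and> b \<in> F}"
  define DK where "DK = {a - b |a b. a \<in> K \<and> b \<in> K}"
  have DKW: "DK \<subseteq> Wsp T"
  proof
    fix d assume "d \<in> DK"
    then obtain a b where "a \<in> K" "b \<in> K" "d = a - b" unfolding DK_def by blast
    then show "d \<in> Wsp T" using KW real_vector.subspace_diff[OF subspace_Wsp[of T]] by blast
  qed
  have DFDK: "DF \<subseteq> DK" using FK unfolding DF_def DK_def by blast
  have sDF: "span DF \<subseteq> Wsp T"
    using DFDK DKW by (intro real_vector.span_minimal subspace_Wsp) auto
  have sDK: "span DK \<subseteq> Wsp T"
    using DKW by (intro real_vector.span_minimal subspace_Wsp) auto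
  have g0: "g d = 0" if "d \<in> span DF" for d
  proof (rule real_vector.linear_eq_0_on_span[OF lin _ that])
    fix x assume "x \<in> DF"
    then obtain a b where "a \<in> F" "b \<in> F" "x = a - b" unfolding DF_def by blast
    then show "g x = 0" using Fg by (simp add: real_vector.linear_diff[OF lin])
  qed
  define w where "w j = eyv j - g (eyv j) *\<^sub>R exv t" for j
  define I where "I = (Inl ` ({1..T} - {t}) \<union> Inr ` (({1..T}) :: nat set) :: (nat + nat) set)"
  define IK where "IK = (Inl ` {1..T} \<union> Inr ` (({1..T}) :: nat set) :: (nat + nat) set)"
  define vF where "vF = case_sum exv w"
  define vK where "vK = case_sum exv eyv"
  define ff where "ff = case_sum (\<lambda>i (p::pt). fst p i) (\<lambda>j (p::pt). snd p j)"
  have linff: "linear (ff i)" for i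
    unfolding ff_def by (cases i) (auto simp: linear_fst_at linear_snd_at)
  have bF: "ff i (vF j) = (if i = j then 1 else 0)" if "i \<in> I" "j \<in> I" for i j
    using that unfolding I_def ff_def vF_def w_def
    by (auto simp: exv_def eyv_def ev_def scaleR_fun_def split: if_splits)
  have bK: "ff i (vK j) = (if i = j then 1 else 0)" if "i \<in> IK" "j \<in> IK" for i j
    using that unfolding IK_def ff_def vK_def
    by (auto simp: exv_def eyv_def ev_def split: if_splits)
  note biF = biorth[of I ff vF, OF linff bF]
  note biK = biorth[of IK ff vK, OF linff bK]
  have cardI: "card I = 2*T - 1"
  proof -
    have "card I = card (Inl ` ({1..T} - {t}) :: (nat+nat) set) + card (Inr ` {1..T} :: (nat+nat) set)"
      unfolding I_def by (rule card_Un_disjoint) auto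
    also have "\<dots> = card ({1..T} - {t}) + card {1..T}"
      by (simp add: card_image)
    also have "\<dots> = 2*T - 1" using t by simp
    finally show ?thesis .
  qed
  have cardIK: "card IK = 2*T"
  proof -
    have "card IK = card (Inl ` {1..T} :: (nat+nat) set) + card (Inr ` {1..T} :: (nat+nat) set)"
      unfolding IK_def by (rule card_Un_disjoint) auto
    also have "\<dots> = card {1..T} + card {1..T}"
      by (simp add: card_image)
    finally show ?thesis by simp
  qed
  have gd: "g d = fst d t + (\<Sum>j\<in>{1..T}. snd d j * g (eyv j))" if "d \<in> Wsp T" for d
    by (rule g_decomp[OF lin t gx that])
  have sumt: "(\<Sum>i\<in>{1..T}. fst d i *\<^sub>R exv i) = fst d t *\<^sub>R exv t + (\<Sum>i\<in>{1..T} - {t}. fst d i *\<^sub>R exv i)" for d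
    using t by (simp add: sum.remove)
  have inI: "exv i \<in> vF ` I" if "i \<in> {1..T}" "i \<noteq> t" for i
    using that unfolding I_def vF_def by (auto intro!: image_eqI[of _ _ "Inl i"])
  have inIw: "w j \<in> vF ` I" if "j \<in> {1..T}" for j
    using that unfolding I_def vF_def by (auto intro!: image_eqI[of _ _ "Inr j"])
  have DFsub: "DF \<subseteq> span (vF ` I)"
  proof
    fix d assume dD: "d \<in> DF"
    then have dW: "d \<in> Wsp T" and dg: "g d = 0" using sDF g0 real_vector.span_base[of d DF] by auto
    have "(\<Sum>j\<in>{1..T}. snd d j *\<^sub>R w j) = (\<Sum>j\<in>{1..T}. snd d j *\<^sub>R eyv j) - (\<Sum>j\<in>{1..T}. snd d j * g (eyv j)) *\<^sub>R exv t"
      unfolding w_def by (simp add: scaleR_diff_right sum_subtractf scaleR_sum_left)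
    also have "(\<Sum>j\<in>{1..T}. snd d j * g (eyv j)) = - fst d t" using gd[OF dW] dg by simp
    finally have e1: "(\<Sum>j\<in>{1..T}. snd d j *\<^sub>R w j) = (\<Sum>j\<in>{1..T}. snd d j *\<^sub>R eyv j) + fst d t *\<^sub>R exv t"
      by simp
    have "d = (\<Sum>i\<in>{1..T} - {t}. fst d i *\<^sub>R exv i) + (\<Sum>j\<in>{1..T}. snd d j *\<^sub>R w j)"
      using decomp[OF dW] unfolding e1 sumt by (simp add: algebra_simps)
    also have "\<dots> \<in> span (vF ` I)"
      by (intro real_vector.span_add real_vector.span_sum real_vector.span_scale real_vector.span_base inI inIw) auto
    finally show "d \<in> span (vF ` I)" .
  qed
  have wspan: "w j \<in> span DF" if j: "j \<in> {1..T}" for j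
  proof -
    obtain d where d: "d \<in> span DF" "snd d = ev j" using hy[OF j] unfolding DF_def by blast
    have dW: "d \<in> Wsp T" using d sDF by auto
    have dg: "g d = 0" using g0 d by auto
    have "(\<Sum>j'\<in>{1..T}. snd d j' * g (eyv j')) = g (eyv j)"
      using j by (simp add: d ev_def if_distrib[of "\<lambda>x. x * _"] sum.delta cong: if_cong)
    then have ft: "fst d t = - g (eyv j)" using gd[OF dW] dg by simp
    have "(\<Sum>j'\<in>{1..T}. snd d j' *\<^sub>R eyv j') = eyv j"
      using j by (simp add: d ev_def if_distrib[of "\<lambda>x. x *\<^sub>R _"] sum.delta cong: if_cong)
    then have "d = (\<Sum>i\<in>{1..T} - {t}. fst d i *\<^sub>R exv i) + w j"
      using decomp[OF dW] unfolding sumt ft w_def by (simp add: algebra_simps)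
    then have "w j = d - (\<Sum>i\<in>{1..T} - {t}. fst d i *\<^sub>R exv i)" by (simp add: algebra_simps)
    also have "\<dots> \<in> span DF"
      using hx unfolding DF_def[symmetric]
      by (intro real_vector.span_diff d real_vector.span_sum real_vector.span_scale) auto
    finally show ?thesis .
  qed
  have vFsub: "vF ` I \<subseteq> span DF"
  proof
    fix v assume "v \<in> vF ` I"
    then obtain idx where idx: "idx \<in> I" "v = vF idx" by blast
    show "v \<in> span DF"
    proof (cases idx)
      case (Inl i)
      with idx have "i \<in> {1..T}" "i \<noteq> t" "v = exv i" by (auto simp: I_def vF_def)
      then show ?thesis using hx[of i] unfolding DF_def by simp
    next
      case (Inr j)
      with idx have "j \<in> {1..T}" "v = w j" by (auto simp: I_def vF_def)
      then show ?thesis using wspan by simp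
    qed
  qed
  have spF: "span (vF ` I) = span DF"
    using DFsub vFsub
    by (metis real_vector.span_minimal real_vector.subspace_span subset_antisym)
  have dimF: "dim DF = 2*T - 1"
    using real_vector.dim_eq_card[OF spF biF(2)] card_image[OF biF(1)] cardI by simp
  have DKsub: "DK \<subseteq> span (vK ` IK)"
  proof
    fix d assume "d \<in> DK"
    then have dW: "d \<in> Wsp T" using DKW by auto
    have "d = (\<Sum>i\<in>{1..T}. fst d i *\<^sub>R exv i) + (\<Sum>j\<in>{1..T}. snd d j *\<^sub>R eyv j)"
      using decomp[OF dW] .
    also have "\<dots> \<in> span (vK ` IK)"
      unfolding IK_def vK_def
      by (intro real_vector.span_add real_vector.span_sum real_vector.span_scale real_vector.span_base)
        (force intro: image_eqI[of _ _ "Inl _"], force intro: image_eqI[of _ _ "Inr _"])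
    finally show "d \<in> span (vK ` IK)" .
  qed
  have sFK: "span DF \<subseteq> span DK" using DFDK by (rule real_vector.span_mono)
  have vKsub: "vK ` IK \<subseteq> span DK"
  proof
    fix v assume "v \<in> vK ` IK"
    then consider (x) i where "i \<in> {1..T}" "v = exv i" | (y) j where "j \<in> {1..T}" "v = eyv j"
      unfolding IK_def vK_def by auto
    then show "v \<in> span DK"
    proof cases
      case x
      show ?thesis
      proof (cases "i = t")
        case True then show ?thesis using hxt x unfolding DK_def by simp
      next
        case False then show ?thesis using hx[of i] x sFK unfolding DF_def[symmetric] by auto
      qed
    next
      case y
      have "eyv j = w j + g (eyv j) *\<^sub>R exv t" unfolding w_def by simp
      also have "\<dots> \<in> span DK"
        using wspan[OF y(1)] sFK hxt unfolding DK_def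
        by (intro real_vector.span_add real_vector.span_scale) auto
      finally show ?thesis using y by simp
    qed
  qed
  have spK: "span (vK ` IK) = span DK"
    using DKsub vKsub
    by (metis real_vector.span_minimal real_vector.subspace_span subset_antisym)
  have dimK: "dim DK = 2*T"
    using real_vector.dim_eq_card[OF spK biK(2)] card_image[OF biK(1)] cardIK by simp
  have Kne: "K \<noteq> {}" using Fne FK by auto
  show "affdim K = int (2*T)" using dimK Kne unfolding affdim_def DK_def by simp
  show "affdim F = int (2*T) - 1" using dimF Fne T unfolding affdim_def DF_def by simp
qed

lemma tail:
  fixes Y cc :: "nat \<Rightarrow> real" and smax L :: nat
  assumes bin: "\<And>s. s \<le> Suc smax \<Longrightarrow> Y s = 0 \<or> Y s = 1"
    and run: "\<And>\<rho> r. \<rho> < r \<Longrightarrow> r \<le> smax \<Longrightarrow> Y \<rho> = 0 \<Longrightarrow> (\<forall>j. \<rho> < j \<and> j \<le> r \<longrightarrow> Y j = 1)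
               \<Longrightarrow> Y (Suc r) = 0 \<Longrightarrow> \<rho> + L \<le> r"
    and ccnn: "\<And>s. 0 \<le> cc s"
    and ccmono: "\<And>\<rho> r. \<rho> < r \<Longrightarrow> r \<le> smax \<Longrightarrow> \<rho> + L \<le> r \<Longrightarrow> cc r \<le> cc \<rho>"
    and r: "r \<le> Suc smax"
  shows "(Y r = 0 \<longrightarrow> (\<Sum>s\<in>{r..smax}. cc s * (Y s - Y (Suc s))) \<le> 0) \<and>
         (\<forall>\<rho><r. Y r = 1 \<longrightarrow> Y \<rho> = 0 \<longrightarrow> (\<forall>j. \<rho> < j \<and> j \<le> r \<longrightarrow> Y j = 1) \<longrightarrow>
            (\<Sum>s\<in>{r..smax}. cc s * (Y s - Y (Suc s))) \<le> cc \<rho>)"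
  using r
proof (induction rule: inc_induct)
  case base
  then show ?case using ccnn by simp
next
  case (step n)
  define f where "f r = (\<Sum>s\<in>{r..smax}. cc s * (Y s - Y (Suc s)))" for r
  have fn: "f n = cc n * (Y n - Y (Suc n)) + f (Suc n)"
    unfolding f_def using step(2) by (simp add: sum.atLeast_Suc_atMost)
  have IH1: "Y (Suc n) = 0 \<Longrightarrow> f (Suc n) \<le> 0" using step(3) unfolding f_def by blast
  have IH2: "\<rho> < Suc n \<Longrightarrow> Y (Suc n) = 1 \<Longrightarrow> Y \<rho> = 0 \<Longrightarrow> (\<forall>j. \<rho> < j \<and> j \<le> Suc n \<longrightarrow> Y j = 1)
     \<Longrightarrow> f (Suc n) \<le> cc \<rho>" for \<rho> using step(3) unfolding f_def by blast
  have bn: "Y (Suc n) = 0 \<or> Y (Suc n) = 1" using bin step(2) by simp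
  have P1: "Y n = 0 \<longrightarrow> f n \<le> 0"
  proof
    assume Yn: "Y n = 0"
    show "f n \<le> 0"
    proof (cases "Y (Suc n) = 0")
      case True then show ?thesis using fn IH1 Yn by simp
    next
      case False
      then have "Y (Suc n) = 1" using bn by simp
      moreover have "\<forall>j. n < j \<and> j \<le> Suc n \<longrightarrow> Y j = 1"
        using \<open>Y (Suc n) = 1\<close> by (metis Suc_leI le_antisym)
      moreover have "f (Suc n) \<le> cc n"
        using IH2[of n] calculation Yn by simp
      ultimately show ?thesis using fn Yn by simp
    qed
  qed
  have P2: "f n \<le> cc \<rho>" if rho: "\<rho> < n" "Y n = 1" "Y \<rho> = 0" "\<forall>j. \<rho> < j \<and> j \<le> n \<longrightarrow> Y j = 1" for \<rho>
  proof (cases "Y (Suc n) = 0")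
    case True
    have "\<rho> + L \<le> n" using run[OF rho(1) _ rho(3) rho(4) True] step(2) by simp
    then have "cc n \<le> cc \<rho>" using ccmono[OF rho(1)] step(2) by simp
    then show ?thesis using fn IH1[OF True] True rho(2) by simp
  next
    case False
    then have Y1: "Y (Suc n) = 1" using bn by simp
    have "\<forall>j. \<rho> < j \<and> j \<le> Suc n \<longrightarrow> Y j = 1"
      using Y1 rho(4) le_Suc_eq by blast
    then have "f (Suc n) \<le> cc \<rho>"
      using IH2[of \<rho>] Y1 rho by simp
    then show ?thesis using fn Y1 rho(2) by simp
  qed
  show ?case using P1 P2 unfolding f_def by blast
qed

lemma valid_abs:
  fixes Y cc :: "nat \<Rightarrow> real" and smax L :: nat and X0 Cb Vb V :: real
  assumes bin: "\<And>s. s \<le> Suc smax \<Longrightarrow> Y s = 0 \<or> Y s = 1"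
    and run: "\<And>\<rho> r. \<rho> < r \<Longrightarrow> r \<le> smax \<Longrightarrow> Y \<rho> = 0 \<Longrightarrow> (\<forall>j. \<rho> < j \<and> j \<le> r \<longrightarrow> Y j = 1)
               \<Longrightarrow> Y (Suc r) = 0 \<Longrightarrow> \<rho> + L \<le> r"
    and ccnn: "\<And>s. 0 \<le> cc s"
    and ccmono: "\<And>\<rho> r. \<rho> < r \<Longrightarrow> r \<le> smax \<Longrightarrow> \<rho> + L \<le> r \<Longrightarrow> cc r \<le> cc \<rho>"
    and ccramp: "\<And>r. r \<le> smax \<Longrightarrow> cc r = 0 \<or> cc r = Cb - Vb - real r * V"
    and X0: "X0 \<le> Cb * Y 0"
    and ramp: "\<And>r. r \<le> smax \<Longrightarrow> (\<forall>j\<le>r. Y j = 1) \<Longrightarrow> Y (Suc r) = 0 \<Longrightarrow> X0 \<le> Vb + real r * V"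
  shows "X0 \<le> Cb * Y 0 - (\<Sum>s\<in>{0..smax}. cc s * (Y s - Y (Suc s)))"
proof -
  have T: "(Y r = 0 \<longrightarrow> (\<Sum>s\<in>{r..smax}. cc s * (Y s - Y (Suc s))) \<le> 0) \<and>
         (\<forall>\<rho><r. Y r = 1 \<longrightarrow> Y \<rho> = 0 \<longrightarrow> (\<forall>j. \<rho> < j \<and> j \<le> r \<longrightarrow> Y j = 1) \<longrightarrow>
            (\<Sum>s\<in>{r..smax}. cc s * (Y s - Y (Suc s))) \<le> cc \<rho>)" if "r \<le> Suc smax" for r
    by (rule tail[where Y=Y and cc=cc and smax=smax and L=L]) (rule bin, assumption, rule run, assumption+, rule ccnn, rule ccmono, assumption+, rule that)
  have b0: "Y 0 = 0 \<or> Y 0 = 1" using bin by simp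
  show ?thesis
  proof (cases "Y 0 = 0")
    case True
    have "(\<Sum>s\<in>{0..smax}. cc s * (Y s - Y (Suc s))) \<le> 0"
      using conjunct1[OF T[of 0], THEN mp] True by simp
    then show ?thesis using X0 True by simp
  next
    case False
    then have Y0: "Y 0 = 1" using b0 by simp
    show ?thesis
    proof (cases "\<forall>j\<le>Suc smax. Y j = 1")
      case True
      have "(\<Sum>s\<in>{0..smax}. cc s * (Y s - Y (Suc s))) = 0"
        using True by (intro sum.neutral) auto
      then show ?thesis using X0 Y0 by simp
    next
      case False
      then obtain j where j: "j \<le> Suc smax" "Y j \<noteq> 1" by auto
      obtain k where k: "k \<le> j" "\<forall>i<k. \<not> Y i \<noteq> 1" "Y k \<noteq> 1"
        using ex_least_nat_le[of "\<lambda>i. Y i \<noteq> 1", OF j(2)] by blast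
      have "k \<noteq> 0" using k(3) Y0 by (cases k) auto
      then obtain r where kr: "k = Suc r" by (cases k) auto
      have rs: "r \<le> smax" using k(1) j(1) kr by simp
      have Yk: "Y (Suc r) = 0" using bin[of k] k(1) j(1) k(3) kr by auto
      have Yr: "\<forall>i\<le>r. Y i = 1" using k(2) kr by auto
      define h where "h s = cc s * (Y s - Y (Suc s))" for s
      have e1: "sum h {0..smax} = sum h {0..<r} + sum h {r..smax}"
      proof -
        have e: "{0..smax} = {0..<r} \<union> {r..smax}" using rs by auto
        show ?thesis unfolding e by (rule sum.union_disjoint) auto
      qed
      have e2: "sum h {0..<r} = 0"
        using Yr unfolding h_def by (intro sum.neutral) auto
      have e3: "sum h {r..smax} = h r + sum h {Suc r..smax}"
        using rs by (simp add: sum.atLeast_Suc_atMost)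
      have e4: "h r = cc r" using Yr Yk unfolding h_def by simp
      have e5: "sum h {Suc r..smax} \<le> 0"
      proof -
        have "Suc r \<le> Suc smax" using rs by simp
        from conjunct1[OF T[OF this], THEN mp, OF Yk] show ?thesis unfolding h_def .
      qed
      have le: "(\<Sum>s\<in>{0..smax}. cc s * (Y s - Y (Suc s))) \<le> cc r"
        using e1 e2 e3 e4 e5 unfolding h_def by linarith
      have "X0 \<le> Cb - cc r"
        using ccramp[OF rs] ramp[OF rs Yr Yk] X0 Y0 by auto
      then show ?thesis using le Y0 by simp
    qed
  qed
qed

definition ind :: "nat \<Rightarrow> nat \<Rightarrow> nat \<Rightarrow> real" where
  "ind a b = (\<lambda>i. if a \<le> i \<and> i \<le> b then 1 else 0)"

lemma inP_I:
  assumes "\<And>t. t \<notin> {1..T} \<Longrightarrow> x t = 0 \<and> y t = 0"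
    and "\<And>t. t \<in> {1..T} \<Longrightarrow> y t = 0 \<or> y t = 1"
    and "\<And>t k. t \<in> {2..T} \<Longrightarrow> k \<in> {t..min T (t + L - 1)} \<Longrightarrow> - y (t - 1) + y t - y k \<le> 0"
    and "\<And>t k. t \<in> {2..T} \<Longrightarrow> k \<in> {t..min T (t + l - 1)} \<Longrightarrow> y (t - 1) - y t + y k \<le> 1"
    and "\<And>t. t \<in> {1..T} \<Longrightarrow> Cu * y t \<le> x t \<and> x t \<le> Cb * y t"
    and "\<And>t. t \<in> {2..T} \<Longrightarrow> x t - x (t - 1) \<le> V * y (t - 1) + Vb * (1 - y (t - 1))"
    and "\<And>t. t \<in> {2..T} \<Longrightarrow> x (t - 1) - x t \<le> V * y t + Vb * (1 - y t)"
    and "Cu > 0"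
  shows "inP T L l Cb Cu V Vb (x, y)"
proof -
  have "x t \<ge> 0" if "t \<in> {1..T}" for t
  proof -
    have "Cu * y t \<ge> 0" using assms(2)[OF that] assms(8) by auto
    then show ?thesis using assms(5)[OF that] by linarith
  qed
  then show ?thesis unfolding inP_def Let_def using assms by fastforce
qed

lemma inP_D:
  assumes "inP T L l Cb Cu V Vb p"
  shows "\<And>t. t \<notin> {1..T} \<Longrightarrow> fst p t = 0 \<and> snd p t = 0"
    and "\<And>t. t \<in> {1..T} \<Longrightarrow> snd p t = 0 \<or> snd p t = 1"
    and "\<And>t k. t \<in> {2..T} \<Longrightarrow> k \<in> {t..min T (t + L - 1)} \<Longrightarrow> - snd p (t - 1) + snd p t - snd p k \<le> 0"
    and "\<And>t. t \<in> {1..T} \<Longrightarrow> Cu * snd p t \<le> fst p t \<and> fst p t \<le> Cb * snd p t"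
    and "\<And>t. t \<in> {2..T} \<Longrightarrow> fst p t - fst p (t - 1) \<le> V * snd p (t - 1) + Vb * (1 - snd p (t - 1))"
    and "\<And>t. t \<in> {2..T} \<Longrightarrow> fst p (t - 1) - fst p t \<le> V * snd p t + Vb * (1 - snd p t)"
  using assms unfolding inP_def Let_def by auto

locale setting =
  fixes T L l :: nat and Cb Cu V Vb :: real and \<alpha> \<beta> smax :: nat
  assumes T0: "T > 0" and L0: "L > 0" and l0: "l > 0"
    and CbCu: "Cb > Cu" and Cu0: "Cu > 0" and V0: "V > 0" and VbV: "Vb + V \<le> Cb"
    and CuVb: "Cu < Vb" and VbCu: "Vb < Cu + V"
    and Ls: "L \<le> smax" and sT: "int smax \<le> int T - 2" and sfl: "int smax \<le> \<lfloor>(Cb - Vb) / V\<rfloor>"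
    and ab: "\<alpha> < \<beta>" and bs: "\<beta> \<le> smax"
    and gap: "\<beta> = \<alpha> + 1 \<or> smax \<le> L + \<alpha>"
begin

definition "S = {0..\<alpha>} \<union> {\<beta>..smax}"
definition "c s = Cb - Vb - real s * V"
definition "cc s = (if s \<in> S then c s else 0)"
definition "\<delta> = min V (Cb - Cu)"

lemma sT2: "smax + 2 \<le> T" using sT by linarith

lemma smaxV: "real smax * V \<le> Cb - Vb"
proof -
  have "real smax \<le> (Cb - Vb) / V" using sfl by (simp add: le_floor_iff)
  then show ?thesis using V0 by (simp add: field_simps)
qed

lemma S_sub: "S \<subseteq> {0..smax}" using ab bs unfolding S_def by auto

lemma c_nn: "s \<le> smax \<Longrightarrow> 0 \<le> c s"
proof -
  assume "s \<le> smax"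
  then have "real s * V \<le> real smax * V" using V0 by (simp add: mult_right_mono)
  then show ?thesis using smaxV unfolding c_def by linarith
qed

lemma cc_nn: "0 \<le> cc s"
  using c_nn S_sub unfolding cc_def by auto

lemma cc_mono: "\<rho> < r \<Longrightarrow> r \<le> smax \<Longrightarrow> \<rho> + L \<le> r \<Longrightarrow> cc r \<le> cc \<rho>"
proof -
  assume a: "\<rho> < r" "r \<le> smax" "\<rho> + L \<le> r"
  show "cc r \<le> cc \<rho>"
  proof (cases "r \<in> S")
    case False then show ?thesis using cc_nn[of \<rho>] unfolding cc_def by simp
  next
    case True
    have "\<rho> \<in> S"
    proof (rule ccontr)
      assume "\<rho> \<notin> S"
      then have "\<alpha> < \<rho>" "\<rho> < \<beta>" using a unfolding S_def by auto
      then show False using gap a by auto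
    qed
    then show ?thesis using True a V0 unfolding cc_def c_def by simp
  qed
qed

lemma cc_ramp: "cc r = 0 \<or> cc r = Cb - Vb - real r * V"
  unfolding cc_def c_def by simp

lemma delta_pos: "\<delta> > 0" using V0 CbCu unfolding \<delta>_def by simp

definition "SU k n = ((\<lambda>i. if k \<le> i \<and> i \<le> T then min (Vb + real (i - k) * V) (Vb + real n * V) else 0), ind k T)"
definition "SD k n = ((\<lambda>i. if 1 \<le> i \<and> i \<le> k then min (Vb + real (k - i) * V) (Vb + real n * V) else 0), ind 1 k)"
definition "ON j = ((\<lambda>i. if 1 \<le> i \<and> i \<le> T then (if i = j then Cb - \<delta> else Cb) else 0), ind 1 T)"

lemma min_step: "0 \<le> (V::real) \<Longrightarrow> min a b \<le> min (a + V) b \<and> min (a + V) b - min a b \<le> V"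
  by (auto simp: min_def)

lemma SU_in:
  assumes k: "1 \<le> k" and n: "real n * V \<le> Cb - Vb"
  shows "inP T L l Cb Cu V Vb (SU k n)"
  unfolding SU_def
proof (rule inP_I)
  define f where "f i = min (Vb + real (i - k) * V) (Vb + real n * V)" for i
  have fstep: "f (t - 1) \<le> f t \<and> f t - f (t - 1) \<le> V" if "k < t" for t
  proof -
    have "real (t - k) = real (t - 1 - k) + 1" using that by simp
    then have "f t = min (Vb + real (t - 1 - k) * V + V) (Vb + real n * V)" unfolding f_def by (simp add: algebra_simps)
    then show ?thesis using min_step[of "Vb + real (t - 1 - k) * V" "Vb + real n * V"] V0
      unfolding f_def by (simp add: diff_diff_left)
  qed
  have fb: "Vb \<le> f i \<and> f i \<le> Cb" for i
  proof -
    have "Vb \<le> f i" unfolding f_def using V0 by simp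
    moreover have "f i \<le> Vb + real n * V" unfolding f_def by simp
    ultimately show ?thesis using n by linarith
  qed
  have Vb0: "Vb > 0" using CuVb Cu0 by simp
  note defs = f_def[symmetric]
  show "\<And>t. t \<notin> {1..T} \<Longrightarrow> (if k \<le> t \<and> t \<le> T then min (Vb + real (t - k) * V) (Vb + real n * V) else 0) = 0 \<and> ind k T t = 0"
    using k by (auto simp: ind_def)
  show "\<And>t. t \<in> {1..T} \<Longrightarrow> ind k T t = 0 \<or> ind k T t = 1" by (auto simp: ind_def)
  show "\<And>t k'. t \<in> {2..T} \<Longrightarrow> k' \<in> {t..min T (t + L - 1)} \<Longrightarrow> - ind k T (t - 1) + ind k T t - ind k T k' \<le> 0"
    by (auto simp: ind_def)
  show "\<And>t k'. t \<in> {2..T} \<Longrightarrow> k' \<in> {t..min T (t + l - 1)} \<Longrightarrow> ind k T (t - 1) - ind k T t + ind k T k' \<le> 1"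
    by (auto simp: ind_def)
  show "\<And>t. t \<in> {1..T} \<Longrightarrow> Cu * ind k T t \<le> (if k \<le> t \<and> t \<le> T then min (Vb + real (t - k) * V) (Vb + real n * V) else 0) \<and>
      (if k \<le> t \<and> t \<le> T then min (Vb + real (t - k) * V) (Vb + real n * V) else 0) \<le> Cb * ind k T t"
    unfolding defs using fb CuVb by (auto simp: ind_def intro: order.trans[OF less_imp_le])
  show "\<And>t. t \<in> {2..T} \<Longrightarrow> (if k \<le> t \<and> t \<le> T then min (Vb + real (t - k) * V) (Vb + real n * V) else 0) -
      (if k \<le> t - 1 \<and> t - 1 \<le> T then min (Vb + real (t - 1 - k) * V) (Vb + real n * V) else 0) \<le> V * ind k T (t - 1) + Vb * (1 - ind k T (t - 1))"
    unfolding defs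
  proof -
    fix t assume t: "t \<in> {2..T}"
    consider "t < k" | "t = k" | "k < t" by linarith
    then show "(if k \<le> t \<and> t \<le> T then f t else 0) - (if k \<le> t - 1 \<and> t - 1 \<le> T then f (t - 1) else 0)
          \<le> V * ind k T (t - 1) + Vb * (1 - ind k T (t - 1))"
    proof cases
      case 1 then show ?thesis using Vb0 t by (auto simp: ind_def)
    next
      case 2 then show ?thesis using t k by (auto simp: ind_def f_def)
    next
      case 3 then show ?thesis using t fstep[of t] by (auto simp: ind_def)
    qed
  qed
  show "\<And>t. t \<in> {2..T} \<Longrightarrow> (if k \<le> t - 1 \<and> t - 1 \<le> T then min (Vb + real (t - 1 - k) * V) (Vb + real n * V) else 0) -
      (if k \<le> t \<and> t \<le> T then min (Vb + real (t - k) * V) (Vb + real n * V) else 0) \<le> V * ind k T t + Vb * (1 - ind k T t)"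
    unfolding defs
  proof -
    fix t assume t: "t \<in> {2..T}"
    consider "t < k" | "t = k" | "k < t" by linarith
    then show "(if k \<le> t - 1 \<and> t - 1 \<le> T then f (t - 1) else 0) - (if k \<le> t \<and> t \<le> T then f t else 0)
          \<le> V * ind k T t + Vb * (1 - ind k T t)"
    proof cases
      case 1 then show ?thesis using Vb0 t by (auto simp: ind_def)
    next
      case 2 then show ?thesis using t k fb[of t] V0 Vb0 by (auto simp: ind_def)
    next
      case 3 then show ?thesis using t fstep[of t] V0 by (auto simp: ind_def)
    qed
  qed
  show "Cu > 0" by (rule Cu0)
qed

lemma SD_in:
  assumes k: "k \<le> T" and n: "real n * V \<le> Cb - Vb"
  shows "inP T L l Cb Cu V Vb (SD k n)"
  unfolding SD_def
proof (rule inP_I)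
  define f where "f i = min (Vb + real (k - i) * V) (Vb + real n * V)" for i
  have fstep: "f t \<le> f (t - 1) \<and> f (t - 1) - f t \<le> V" if "t \<le> k" "1 \<le> t" for t
  proof -
    have "real (k - (t - 1)) = real (k - t) + 1" using that by simp
    then have "f (t - 1) = min (Vb + real (k - t) * V + V) (Vb + real n * V)" unfolding f_def by (simp add: algebra_simps)
    then show ?thesis using min_step[of "Vb + real (k - t) * V" "Vb + real n * V"] V0
      unfolding f_def by simp
  qed
  have fb: "Vb \<le> f i \<and> f i \<le> Cb" for i
  proof -
    have "Vb \<le> f i" unfolding f_def using V0 by simp
    moreover have "f i \<le> Vb + real n * V" unfolding f_def by simp
    ultimately show ?thesis using n by linarith
  qed
  have Vb0: "Vb > 0" using CuVb Cu0 by simp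
  note defs = f_def[symmetric]
  show "\<And>t. t \<notin> {1..T} \<Longrightarrow> (if 1 \<le> t \<and> t \<le> k then min (Vb + real (k - t) * V) (Vb + real n * V) else 0) = 0 \<and> ind 1 k t = 0"
    using k by (auto simp: ind_def)
  show "\<And>t. t \<in> {1..T} \<Longrightarrow> ind 1 k t = 0 \<or> ind 1 k t = 1" by (auto simp: ind_def)
  show "\<And>t k'. t \<in> {2..T} \<Longrightarrow> k' \<in> {t..min T (t + L - 1)} \<Longrightarrow> - ind 1 k (t - 1) + ind 1 k t - ind 1 k k' \<le> 0"
    by (auto simp: ind_def)
  show "\<And>t k'. t \<in> {2..T} \<Longrightarrow> k' \<in> {t..min T (t + l - 1)} \<Longrightarrow> ind 1 k (t - 1) - ind 1 k t + ind 1 k k' \<le> 1"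
    by (auto simp: ind_def)
  show "\<And>t. t \<in> {1..T} \<Longrightarrow> Cu * ind 1 k t \<le> (if 1 \<le> t \<and> t \<le> k then min (Vb + real (k - t) * V) (Vb + real n * V) else 0) \<and>
      (if 1 \<le> t \<and> t \<le> k then min (Vb + real (k - t) * V) (Vb + real n * V) else 0) \<le> Cb * ind 1 k t"
    unfolding defs using fb CuVb by (auto simp: ind_def intro: order.trans[OF less_imp_le])
  show "\<And>t. t \<in> {2..T} \<Longrightarrow> (if 1 \<le> t \<and> t \<le> k then min (Vb + real (k - t) * V) (Vb + real n * V) else 0) -
      (if 1 \<le> t - 1 \<and> t - 1 \<le> k then min (Vb + real (k - (t - 1)) * V) (Vb + real n * V) else 0) \<le> V * ind 1 k (t - 1) + Vb * (1 - ind 1 k (t - 1))"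
    unfolding defs
  proof -
    fix t assume t: "t \<in> {2..T}"
    consider "t \<le> k" | "t = k + 1" | "k + 1 < t" by linarith
    then show "(if 1 \<le> t \<and> t \<le> k then f t else 0) - (if 1 \<le> t - 1 \<and> t - 1 \<le> k then f (t - 1) else 0)
          \<le> V * ind 1 k (t - 1) + Vb * (1 - ind 1 k (t - 1))"
    proof cases
      case 1 then show ?thesis using t fstep[of t] V0 by (auto simp: ind_def)
    next
      case 2 then show ?thesis using t fb[of k] V0 Vb0 by (auto simp: ind_def)
    next
      case 3 then show ?thesis using t Vb0 by (auto simp: ind_def)
    qed
  qed
  show "\<And>t. t \<in> {2..T} \<Longrightarrow> (if 1 \<le> t - 1 \<and> t - 1 \<le> k then min (Vb + real (k - (t - 1)) * V) (Vb + real n * V) else 0) -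
      (if 1 \<le> t \<and> t \<le> k then min (Vb + real (k - t) * V) (Vb + real n * V) else 0) \<le> V * ind 1 k t + Vb * (1 - ind 1 k t)"
    unfolding defs
  proof -
    fix t assume t: "t \<in> {2..T}"
    consider "t \<le> k" | "t = k + 1" | "k + 1 < t" by linarith
    then show "(if 1 \<le> t - 1 \<and> t - 1 \<le> k then f (t - 1) else 0) - (if 1 \<le> t \<and> t \<le> k then f t else 0)
          \<le> V * ind 1 k t + Vb * (1 - ind 1 k t)"
    proof cases
      case 1 then show ?thesis using t fstep[of t] by (auto simp: ind_def)
    next
      case 2
      have "f k \<le> Vb" unfolding f_def by simp
      then show ?thesis using t 2 by (auto simp: ind_def)
    next
      case 3 then show ?thesis using t Vb0 by (auto simp: ind_def)
    qed
  qed
  show "Cu > 0" by (rule Cu0)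
qed

lemma ON_in: "inP T L l Cb Cu V Vb (ON j)"
  unfolding ON_def
proof (rule inP_I)
  have d: "\<delta> \<le> V" "\<delta> \<le> Cb - Cu" "0 < \<delta>" using delta_pos unfolding \<delta>_def by auto
  have Vb0: "Vb > 0" using CuVb Cu0 by simp
  show "\<And>t. t \<notin> {1..T} \<Longrightarrow> (if 1 \<le> t \<and> t \<le> T then if t = j then Cb - \<delta> else Cb else 0) = 0 \<and> ind 1 T t = 0"
    by (auto simp: ind_def)
  show "\<And>t. t \<in> {1..T} \<Longrightarrow> ind 1 T t = 0 \<or> ind 1 T t = 1" by (auto simp: ind_def)
  show "\<And>t k'. t \<in> {2..T} \<Longrightarrow> k' \<in> {t..min T (t + L - 1)} \<Longrightarrow> - ind 1 T (t - 1) + ind 1 T t - ind 1 T k' \<le> 0"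
    by (auto simp: ind_def)
  show "\<And>t k'. t \<in> {2..T} \<Longrightarrow> k' \<in> {t..min T (t + l - 1)} \<Longrightarrow> ind 1 T (t - 1) - ind 1 T t + ind 1 T k' \<le> 1"
    by (auto simp: ind_def)
  show "\<And>t. t \<in> {1..T} \<Longrightarrow> Cu * ind 1 T t \<le> (if 1 \<le> t \<and> t \<le> T then if t = j then Cb - \<delta> else Cb else 0) \<and>
      (if 1 \<le> t \<and> t \<le> T then if t = j then Cb - \<delta> else Cb else 0) \<le> Cb * ind 1 T t"
    using d CbCu by (auto simp: ind_def)
  show "\<And>t. t \<in> {2..T} \<Longrightarrow> (if 1 \<le> t \<and> t \<le> T then if t = j then Cb - \<delta> else Cb else 0) -
      (if 1 \<le> t - 1 \<and> t - 1 \<le> T then if t - 1 = j then Cb - \<delta> else Cb else 0) \<le> V * ind 1 T (t - 1) + Vb * (1 - ind 1 T (t - 1))"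
    using d by (auto simp: ind_def)
  show "\<And>t. t \<in> {2..T} \<Longrightarrow> (if 1 \<le> t - 1 \<and> t - 1 \<le> T then if t - 1 = j then Cb - \<delta> else Cb else 0) -
      (if 1 \<le> t \<and> t \<le> T then if t = j then Cb - \<delta> else Cb else 0) \<le> V * ind 1 T t + Vb * (1 - ind 1 T t)"
    using d by (auto simp: ind_def)
  show "Cu > 0" by (rule Cu0)
qed

end

lemma linear_rhs_gen:
  fixes t :: nat and A :: "nat set" and a b :: "nat \<Rightarrow> nat" and w :: "nat \<Rightarrow> real" and Cb :: real
  shows "linear (\<lambda>p::pt. fst p t - (Cb * snd p t - (\<Sum>s\<in>A. w s * (snd p (a s) - snd p (b s)))))"
  by (rule linearI)
    (auto simp: scaleR_fun_def algebra_simps sum.distrib sum_distrib_left sum_subtractf)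

lemma valid_hull:
  fixes h :: "pt \<Rightarrow> real"
  assumes lin: "linear h" and A: "\<And>p. p \<in> A \<Longrightarrow> h p \<le> 0"
  shows "\<And>p. p \<in> convex hull A \<Longrightarrow> h p \<le> 0"
proof -
  have "convex {p. h p \<le> 0}"
  proof (rule convexI)
    fix x y :: pt and u v :: real
    assume "x \<in> {p. h p \<le> 0}" "y \<in> {p. h p \<le> 0}" "0 \<le> u" "0 \<le> v" "u + v = 1"
    then show "u *\<^sub>R x + v *\<^sub>R y \<in> {p. h p \<le> 0}"
      by (simp add: real_vector.linear_add[OF lin] real_vector.linear_scale[OF lin]
          mult_nonneg_nonpos add_nonpos_nonpos)
  qed
  then have "convex hull A \<subseteq> {p. h p \<le> 0}" using A by (intro hull_minimal) auto
  then show "\<And>p. p \<in> convex hull A \<Longrightarrow> h p \<le> 0" by auto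
qed

context setting
begin

lemma sum_S_conv: "(\<Sum>s\<in>S. (Cb - Vb - real s * V) * h s) = (\<Sum>s\<in>{0..smax}. cc s * h s)"
proof -
  have "(\<Sum>s\<in>{0..smax}. cc s * h s) = (\<Sum>s\<in>{0..smax}. if s \<in> S then c s * h s else 0)"
    unfolding cc_def by (rule sum.cong) auto
  also have "\<dots> = (\<Sum>s\<in>{0..smax} \<inter> S. c s * h s)" by (rule sum.inter_restrict[symmetric]) simp
  also have "{0..smax} \<inter> S = S" using S_sub by auto
  finally show ?thesis unfolding c_def by simp
qed

lemma ramp1:
  assumes p: "inP T L l Cb Cu V Vb p" and \<tau>: "2 \<le> \<tau>" "\<tau> + m \<le> T"
    and y0: "snd p (\<tau> - 1) = 0" and y1: "\<forall>j\<le>m. snd p (\<tau> + j) = 1"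
  shows "fst p (\<tau> + m) \<le> Vb + real m * V"
  using \<tau>(2) y1
proof (induction m)
  case 0
  have "fst p \<tau> - fst p (\<tau> - 1) \<le> V * snd p (\<tau> - 1) + Vb * (1 - snd p (\<tau> - 1))"
    using inP_D(5)[OF p, of \<tau>] \<tau> 0 by simp
  moreover have "\<tau> - 1 \<in> {1..T}" using \<tau> by auto
  then have "fst p (\<tau> - 1) \<le> Cb * snd p (\<tau> - 1)" using inP_D(4)[OF p] by blast
  ultimately show ?case using y0 by simp
next
  case (Suc m)
  have IH: "fst p (\<tau> + m) \<le> Vb + real m * V" using Suc by simp
  have "fst p (\<tau> + Suc m) - fst p (\<tau> + Suc m - 1) \<le> V * snd p (\<tau> + Suc m - 1) + Vb * (1 - snd p (\<tau> + Suc m - 1))"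
    using inP_D(5)[OF p, of "\<tau> + Suc m"] \<tau> Suc by simp
  moreover have "snd p (\<tau> + m) = 1" using Suc by simp
  ultimately show ?case using IH by (simp add: algebra_simps)
qed

lemma ramp2:
  assumes p: "inP T L l Cb Cu V Vb p" and \<tau>: "\<tau> + 1 \<le> T" "m < \<tau>"
    and y0: "snd p (\<tau> + 1) = 0" and y1: "\<forall>j\<le>m. snd p (\<tau> - j) = 1"
  shows "fst p (\<tau> - m) \<le> Vb + real m * V"
  using \<tau>(2) y1
proof (induction m)
  case 0
  have "fst p (\<tau> + 1 - 1) - fst p (\<tau> + 1) \<le> V * snd p (\<tau> + 1) + Vb * (1 - snd p (\<tau> + 1))"
    using inP_D(6)[OF p, of "\<tau> + 1"] \<tau> 0 by simp
  moreover have "fst p (\<tau> + 1) \<le> Cb * snd p (\<tau> + 1)" using inP_D(4)[OF p, of "\<tau> + 1"] \<tau> by simp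
  ultimately show ?case using y0 by simp
next
  case (Suc m)
  have IH: "fst p (\<tau> - m) \<le> Vb + real m * V" using Suc by simp
  have e: "\<tau> - m - 1 = \<tau> - Suc m" by simp
  have "fst p (\<tau> - m - 1) - fst p (\<tau> - m) \<le> V * snd p (\<tau> - m) + Vb * (1 - snd p (\<tau> - m))"
  proof -
    have "\<tau> - m \<in> {2..T}" using \<tau> Suc by auto
    then show ?thesis using inP_D(6)[OF p] by blast
  qed
  moreover have "snd p (\<tau> - m) = 1" using Suc by simp
  ultimately show ?case using IH unfolding e by (simp add: algebra_simps)
qed

lemma valid1:
  assumes p: "inP T L l Cb Cu V Vb p" and t: "t \<in> {smax + 2..T}"
  shows "fst p t \<le> Cb * snd p t - (\<Sum>s\<in>S. (Cb - Vb - real s * V) * (snd p (t - s) - snd p (t - s - 1)))"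
proof -
  define Y where "Y s = snd p (t - s)" for s
  have bin: "Y s = 0 \<or> Y s = 1" if "s \<le> Suc smax" for s
  proof -
    have "t - s \<in> {1..T}" using that t by auto
    then show ?thesis unfolding Y_def using inP_D(2)[OF p] by blast
  qed
  have run: "\<rho> + L \<le> r" if a: "\<rho> < r" "r \<le> smax" "Y \<rho> = 0" "\<forall>j. \<rho> < j \<and> j \<le> r \<longrightarrow> Y j = 1" "Y (Suc r) = 0" for \<rho> r
  proof (rule ccontr)
    assume "\<not> \<rho> + L \<le> r"
    then have k: "t - \<rho> \<in> {t - r..min T (t - r + L - 1)}" using a t by auto
    have "- snd p (t - r - 1) + snd p (t - r) - snd p (t - \<rho>) \<le> 0"
      using inP_D(3)[OF p, of "t - r" "t - \<rho>"] k a t by auto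
    moreover have "snd p (t - r - 1) = 0" using a(5) unfolding Y_def by (simp add: diff_diff_left)
    moreover have "snd p (t - r) = 1" using a(4) a(1) unfolding Y_def by auto
    moreover have "snd p (t - \<rho>) = 0" using a(3) unfolding Y_def by simp
    ultimately show False by simp
  qed
  have X0: "fst p t \<le> Cb * Y 0" using inP_D(4)[OF p, of t] t unfolding Y_def by auto
  have ramp: "fst p t \<le> Vb + real r * V" if a: "r \<le> smax" "\<forall>j\<le>r. Y j = 1" "Y (Suc r) = 0" for r
  proof -
    have "fst p (t - r + r) \<le> Vb + real r * V"
    proof (rule ramp1[OF p])
      show "2 \<le> t - r" "t - r + r \<le> T" using a t by auto
      show "snd p (t - r - 1) = 0" using a(3) unfolding Y_def by (simp add: diff_diff_left)
      show "\<forall>j\<le>r. snd p (t - r + j) = 1"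
      proof (intro allI impI)
        fix j assume "j \<le> r"
        then have e: "t - r + j = t - (r - j)" using a t by auto
        have "snd p (t - (r - j)) = 1" using a(2)[rule_format, of "r - j"] unfolding Y_def by simp
        then show "snd p (t - r + j) = 1" unfolding e .
      qed
    qed
    then show ?thesis using a t by simp
  qed
  have "fst p t \<le> Cb * Y 0 - (\<Sum>s\<in>{0..smax}. cc s * (Y s - Y (Suc s)))"
    apply (rule valid_abs[where Y=Y and cc=cc and smax=smax and L=L])
          apply (erule bin)
         apply (erule (4) run)
        apply (rule cc_nn)
       apply (erule (2) cc_mono)
      apply (rule cc_ramp)
     apply (rule X0)
    apply (erule (2) ramp)
    done
  moreover have "(\<Sum>s\<in>S. (Cb - Vb - real s * V) * (snd p (t - s) - snd p (t - s - 1))) = (\<Sum>s\<in>{0..smax}. cc s * (Y s - Y (Suc s)))"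
    unfolding sum_S_conv Y_def by (simp add: diff_diff_left)
  ultimately show ?thesis unfolding Y_def by simp
qed

lemma valid2:
  assumes p: "inP T L l Cb Cu V Vb p" and t: "t \<in> {1..T - smax - 1}"
  shows "fst p t \<le> Cb * snd p t - (\<Sum>s\<in>S. (Cb - Vb - real s * V) * (snd p (t + s) - snd p (t + s + 1)))"
proof -
  define Y where "Y s = snd p (t + s)" for s
  have tT: "t + smax + 1 \<le> T" using t sT2 by auto
  have bin: "Y s = 0 \<or> Y s = 1" if "s \<le> Suc smax" for s
    unfolding Y_def using inP_D(2)[OF p, of "t + s"] that t tT by auto
  have run: "\<rho> + L \<le> r" if a: "\<rho> < r" "r \<le> smax" "Y \<rho> = 0" "\<forall>j. \<rho> < j \<and> j \<le> r \<longrightarrow> Y j = 1" "Y (Suc r) = 0" for \<rho> r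
  proof (rule ccontr)
    assume "\<not> \<rho> + L \<le> r"
    then have k: "t + r + 1 \<in> {t + \<rho> + 1..min T (t + \<rho> + 1 + L - 1)}" using a t tT by auto
    have "- snd p (t + \<rho> + 1 - 1) + snd p (t + \<rho> + 1) - snd p (t + r + 1) \<le> 0"
      using inP_D(3)[OF p, of "t + \<rho> + 1" "t + r + 1"] k a t tT by auto
    moreover have "snd p (t + \<rho> + 1 - 1) = 0" using a(3) unfolding Y_def by simp
    moreover have "snd p (t + \<rho> + 1) = 1" using a(4) a(1) unfolding Y_def by auto
    moreover have "snd p (t + r + 1) = 0" using a(5) unfolding Y_def by simp
    ultimately show False by simp
  qed
  have X0: "fst p t \<le> Cb * Y 0" using inP_D(4)[OF p, of t] t tT unfolding Y_def by auto
  have ramp: "fst p t \<le> Vb + real r * V" if a: "r \<le> smax" "\<forall>j\<le>r. Y j = 1" "Y (Suc r) = 0" for r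
  proof -
    have "fst p (t + r - r) \<le> Vb + real r * V"
    proof (rule ramp2[OF p])
      show "t + r + 1 \<le> T" "r < t + r" using a t tT by auto
      show "snd p (t + r + 1) = 0" using a(3) unfolding Y_def by simp
      show "\<forall>j\<le>r. snd p (t + r - j) = 1"
      proof (intro allI impI)
        fix j assume "j \<le> r"
        then have "t + r - j = t + (r - j)" by auto
        then show "snd p (t + r - j) = 1" using a(2)[rule_format, of "r - j"] unfolding Y_def by simp
      qed
    qed
    then show ?thesis by simp
  qed
  have "fst p t \<le> Cb * Y 0 - (\<Sum>s\<in>{0..smax}. cc s * (Y s - Y (Suc s)))"
    apply (rule valid_abs[where Y=Y and cc=cc and smax=smax and L=L])
          apply (erule bin)
         apply (erule (4) run)
        apply (rule cc_nn)
       apply (erule (2) cc_mono)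
      apply (rule cc_ramp)
     apply (rule X0)
    apply (erule (2) ramp)
    done
  moreover have "(\<Sum>s\<in>S. (Cb - Vb - real s * V) * (snd p (t + s) - snd p (t + s + 1))) = (\<Sum>s\<in>{0..smax}. cc s * (Y s - Y (Suc s)))"
    unfolding sum_S_conv Y_def by simp
  ultimately show ?thesis unfolding Y_def by simp
qed

end

context setting
begin

definition "w s = Cb - Vb - real s * V"
definition "Pt = Pset T L l Cb Cu V Vb"
definition "KK = convex hull Pt"

lemma inPt: "inP T L l Cb Cu V Vb p \<Longrightarrow> p \<in> KK"
  unfolding KK_def Pt_def Pset_def by (rule hull_inc) simp

lemma KW: "KK \<subseteq> Wsp T"
proof -
  have "Pt \<subseteq> Wsp T" unfolding Pt_def Pset_def Wsp_def using inP_D(1) by blast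
  then show ?thesis unfolding KK_def
    by (intro hull_minimal subspace_imp_convex subspace_Wsp)
qed

lemma S_fin: "finite S" using S_sub finite_subset by blast

lemma sum1_from:
  assumes t: "t \<in> {smax + 2..T}"
  shows "(\<Sum>s\<in>S. w s * (ind k T (t - s) - ind k T (t - s - 1))) = (if k \<le> t \<and> t - k \<in> S then w (t - k) else 0)"
proof -
  have "(\<Sum>s\<in>S. w s * (ind k T (t - s) - ind k T (t - s - 1))) = (\<Sum>s\<in>S. if s = t - k \<and> k \<le> t then w s else 0)"
  proof (rule sum.cong)
    fix s assume "s \<in> S"
    then have s: "s \<le> smax" using S_sub by auto
    then show "w s * (ind k T (t - s) - ind k T (t - s - 1)) = (if s = t - k \<and> k \<le> t then w s else 0)"
      using t by (auto simp: ind_def)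
  qed simp
  also have "\<dots> = (if k \<le> t \<and> t - k \<in> S then w (t - k) else 0)"
    by (cases "k \<le> t") (simp_all add: sum.delta S_fin)
  finally show ?thesis .
qed

lemma sum1_to:
  assumes t: "t \<in> {smax + 2..T}"
  shows "(\<Sum>s\<in>S. w s * (ind 1 m (t - s) - ind 1 m (t - s - 1))) = - (if m < t \<and> t - 1 - m \<in> S then w (t - 1 - m) else 0)"
proof -
  have "(\<Sum>s\<in>S. w s * (ind 1 m (t - s) - ind 1 m (t - s - 1))) = - (\<Sum>s\<in>S. if s = t - 1 - m \<and> m < t then w s else 0)"
    unfolding sum_negf[symmetric]
  proof (rule sum.cong)
    fix s assume "s \<in> S"
    then have s: "s \<le> smax" using S_sub by auto
    then show "w s * (ind 1 m (t - s) - ind 1 m (t - s - 1)) = - (if s = t - 1 - m \<and> m < t then w s else 0)"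
      using t by (auto simp: ind_def)
  qed simp
  also have "\<dots> = - (if m < t \<and> t - 1 - m \<in> S then w (t - 1 - m) else 0)"
    by (cases "m < t") (simp_all add: sum.delta S_fin)
  finally show ?thesis .
qed

lemma sum2_to:
  assumes t: "t \<in> {1..T - smax - 1}"
  shows "(\<Sum>s\<in>S. w s * (ind 1 k (t + s) - ind 1 k (t + s + 1))) = (if t \<le> k \<and> k - t \<in> S then w (k - t) else 0)"
proof -
  have "(\<Sum>s\<in>S. w s * (ind 1 k (t + s) - ind 1 k (t + s + 1))) = (\<Sum>s\<in>S. if s = k - t \<and> t \<le> k then w s else 0)"
  proof (rule sum.cong)
    fix s assume "s \<in> S"
    then have s: "s \<le> smax" using S_sub by auto
    then show "w s * (ind 1 k (t + s) - ind 1 k (t + s + 1)) = (if s = k - t \<and> t \<le> k then w s else 0)"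
      using t by (auto simp: ind_def)
  qed simp
  also have "\<dots> = (if t \<le> k \<and> k - t \<in> S then w (k - t) else 0)"
    by (cases "t \<le> k") (simp_all add: sum.delta S_fin)
  finally show ?thesis .
qed

lemma sum2_from:
  assumes t: "t \<in> {1..T - smax - 1}"
  shows "(\<Sum>s\<in>S. w s * (ind m T (t + s) - ind m T (t + s + 1))) = - (if t < m \<and> m - t - 1 \<in> S then w (m - t - 1) else 0)"
proof -
  have tT: "t + smax + 1 \<le> T" using t sT2 by auto
  have "(\<Sum>s\<in>S. w s * (ind m T (t + s) - ind m T (t + s + 1))) = - (\<Sum>s\<in>S. if s = m - t - 1 \<and> t < m then w s else 0)"
    unfolding sum_negf[symmetric]
  proof (rule sum.cong)
    fix s assume "s \<in> S"
    then have s: "s \<le> smax" using S_sub by auto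
    then show "w s * (ind m T (t + s) - ind m T (t + s + 1)) = - (if s = m - t - 1 \<and> t < m then w s else 0)"
      using t tT by (auto simp: ind_def)
  qed simp
  also have "\<dots> = - (if t < m \<and> m - t - 1 \<in> S then w (m - t - 1) else 0)"
    by (cases "t < m") (simp_all add: sum.delta S_fin)
  finally show ?thesis .
qed

lemma sV: "s \<in> S \<Longrightarrow> real s * V \<le> Cb - Vb"
proof -
  assume "s \<in> S"
  then have "s \<le> smax" using S_sub by auto
  then have "real s * V \<le> real smax * V" using V0 by (simp add: mult_right_mono)
  then show ?thesis using smaxV by linarith
qed

definition "rhs1 t p = Cb * snd p t - (\<Sum>s\<in>S. (Cb - Vb - real s * V) * (snd p (t - s) - snd p (t - s - 1)))"
definition "F1 t = {p \<in> KK. fst p t = rhs1 t p}"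

lemma ZERO: "SU (T + 1) 0 = 0"
  unfolding SU_def ind_def by (auto simp: zero_prod_def)

lemma ind_split1: "m \<le> T \<Longrightarrow> ind 1 m = ind 1 T - ind (m + 1) T"
  by (auto simp: ind_def fun_eq_iff)

lemma ind_ev1: "1 \<le> k \<Longrightarrow> ev k = ind 1 k - ind 1 (k - 1)"
  by (auto simp: ind_def ev_def fun_eq_iff)

lemma ind_split2: "1 \<le> m \<Longrightarrow> m \<le> T + 1 \<Longrightarrow> ind m T = ind 1 T - ind 1 (m - 1)"
  by (auto simp: ind_def fun_eq_iff)

lemma ind_ev2: "ev k = ind k T - ind (k + 1) T" if "k \<le> T"
  using that by (auto simp: ind_def ev_def fun_eq_iff)

lemma ON_diff: "ON 0 - ON i = \<delta> *\<^sub>R exv i" if "i \<in> {1..T}"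
  using that unfolding ON_def exv_def ev_def by (auto simp: fun_eq_iff scaleR_fun_def)

context
  fixes t assumes t: "t \<in> {smax + 2..T}"
begin

lemma F1_ON: "j \<noteq> t \<Longrightarrow> ON j \<in> F1 t"
  unfolding F1_def rhs1_def using inPt[OF ON_in] sum1_to[OF t, of T, unfolded w_def] t
  by (auto simp: ON_def ind_def)

lemma F1_SUa: "t < k \<Longrightarrow> k \<le> T + 1 \<Longrightarrow> SU k 0 \<in> F1 t"
  unfolding F1_def rhs1_def using inPt[OF SU_in[of k 0]] sum1_from[OF t, of k, unfolded w_def] t V0 VbV
  by (auto simp: SU_def ind_def)

lemma F1_SUb: "s \<in> S \<Longrightarrow> SU (t - s) s \<in> F1 t"
proof -
  assume s: "s \<in> S"
  then have ss: "s \<le> smax" using S_sub by auto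
  have inK: "SU (t - s) s \<in> KK" using inPt[OF SU_in[of "t - s" s]] ss t sV[OF s] by auto
  have e: "t - (t - s) = s" using ss t by auto
  show ?thesis
    unfolding F1_def rhs1_def using inK sum1_from[OF t, of "t - s", unfolded w_def] ss t s e
    by (auto simp: SU_def ind_def)
qed

lemma F1_SD: "m < t \<Longrightarrow> t - 1 - m \<notin> S \<Longrightarrow> SD m 0 \<in> F1 t"
  unfolding F1_def rhs1_def using inPt[OF SD_in[of m 0]] sum1_to[OF t, of m, unfolded w_def] t V0 VbV
  by (auto simp: SD_def ind_def)

lemma F1_span_snd:
  assumes q: "q \<in> F1 t"
  shows "snd q \<in> span (snd ` {a - b |a b. a \<in> F1 t \<and> b \<in> F1 t})"
proof -
  have z: "SU (T + 1) 0 \<in> F1 t" using F1_SUa t by simp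
  have "q - SU (T + 1) 0 \<in> {a - b |a b. a \<in> F1 t \<and> b \<in> F1 t}" using q z by blast
  then have "snd (q - SU (T + 1) 0) \<in> snd ` {a - b |a b. a \<in> F1 t \<and> b \<in> F1 t}" by blast
  then show ?thesis unfolding ZERO by (simp add: real_vector.span_base)
qed

lemma F1_hy:
  assumes k: "k \<in> {1..T}"
  shows "\<exists>d\<in>span {a - b |a b. a \<in> F1 t \<and> b \<in> F1 t}. snd d = ev k"
proof -
  define Y where "Y = span (snd ` {a - b |a b. a \<in> F1 t \<and> b \<in> F1 t})"
  have top: "ind 1 T \<in> Y" using F1_span_snd[OF F1_ON[of 0]] t unfolding Y_def by (simp add: ON_def)
  have im: "ind 1 m \<in> Y" if m: "m \<le> T" for m
  proof (cases "t \<le> m \<or> t - 1 - m \<in> S")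
    case True
    have q: "SU (m + 1) (t - (m + 1)) \<in> F1 t \<or> SU (m + 1) 0 \<in> F1 t"
    proof (cases "t \<le> m")
      case True then show ?thesis using F1_SUa[of "m + 1"] m by simp
    next
      case False
      then have "t - 1 - m \<in> S" using \<open>t \<le> m \<or> t - 1 - m \<in> S\<close> by simp
      moreover have "t - (t - 1 - m) = m + 1" using False by simp
      ultimately show ?thesis using F1_SUb[of "t - 1 - m"] by (simp add: diff_diff_left)
    qed
    have "ind (m + 1) T \<in> Y"
      using q F1_span_snd unfolding Y_def SU_def by auto
    then show ?thesis unfolding ind_split1[OF m] Y_def using top unfolding Y_def
      by (intro real_vector.span_diff) auto
  next
    case False
    then have "SD m 0 \<in> F1 t" using F1_SD by simp
    then show ?thesis using F1_span_snd unfolding Y_def SD_def by auto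
  qed
  have e: "ev k = ind 1 k - ind 1 (k - 1)" using k by (intro ind_ev1) auto
  have a1: "ind 1 k \<in> Y" "ind 1 (k - 1) \<in> Y" using k im by auto
  have "ev k \<in> Y" unfolding e using a1 unfolding Y_def
    by (intro real_vector.span_diff)
  then have "ev k \<in> snd ` span {a - b |a b. a \<in> F1 t \<and> b \<in> F1 t}"
    unfolding Y_def real_vector.linear_span_image[OF real_vector.linear_snd] .
  then show ?thesis by force
qed

end

lemma exv_span:
  assumes "ON 0 \<in> A" "ON i \<in> A" "i \<in> {1..T}"
  shows "exv i \<in> span {a - b |a b. a \<in> A \<and> b \<in> A}"
proof -
  have "ON 0 - ON i \<in> {a - b |a b. a \<in> A \<and> b \<in> A}" using assms by blast
  then have "(1 / \<delta>) *\<^sub>R (ON 0 - ON i) \<in> span {a - b |a b. a \<in> A \<and> b \<in> A}"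
    by (intro real_vector.span_scale real_vector.span_base)
  then show ?thesis unfolding ON_diff[OF assms(3)] using delta_pos by simp
qed

lemma facet1:
  assumes t: "t \<in> {smax + 2..T}"
  shows "facet_defining KK (\<lambda>p. fst p t) (rhs1 t)"
proof -
  define h where "h p = fst p t - rhs1 t p" for p
  have lin: "linear h" unfolding h_def rhs1_def by (rule linear_rhs_gen)
  have val: "\<forall>p\<in>KK. fst p t \<le> rhs1 t p"
  proof
    fix p assume "p \<in> KK"
    have "h p \<le> 0"
    proof (rule valid_hull[OF lin])
      show "p \<in> convex hull Pt" using \<open>p \<in> KK\<close> unfolding KK_def .
    next
      fix q assume "q \<in> Pt"
      then show "h q \<le> 0" unfolding h_def rhs1_def Pt_def Pset_def using valid1[OF _ t] by auto
    qed
    then show "fst p t \<le> rhs1 t p" unfolding h_def by simp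
  qed
  have t1: "t \<in> {1..T}" using t by auto
  have gx: "h (exv i) = (if i = t then 1 else 0)" for i
    unfolding h_def rhs1_def exv_def ev_def by auto
  have F1K: "F1 t \<subseteq> KK" unfolding F1_def by auto
  have Fg: "h p = 0" if "p \<in> F1 t" for p using that unfolding F1_def h_def by auto
  have Fne: "F1 t \<noteq> {}" using F1_ON[OF t, of 0] t by auto
  have hx: "exv i \<in> span {a - b |a b. a \<in> F1 t \<and> b \<in> F1 t}" if "i \<in> {1..T}" "i \<noteq> t" for i
    using exv_span[OF F1_ON[OF t, of 0] F1_ON[OF t, of i]] that t by auto
  have hxt: "exv t \<in> span {a - b |a b. a \<in> KK \<and> b \<in> KK}"
    using exv_span[OF inPt[OF ON_in] inPt[OF ON_in] t1] .
  note D = dims[OF T0 t1 lin gx KW F1K Fg Fne hx hxt F1_hy[OF t]]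
  show ?thesis unfolding facet_defining_def valid_ineq_def
    using val D unfolding F1_def by simp
qed

definition "rhs2 t p = Cb * snd p t - (\<Sum>s\<in>S. (Cb - Vb - real s * V) * (snd p (t + s) - snd p (t + s + 1)))"
definition "F2 t = {p \<in> KK. fst p t = rhs2 t p}"

context
  fixes t assumes t: "t \<in> {1..T - smax - 1}"
begin

lemma tT2: "t + smax + 1 \<le> T" using t sT2 by auto

lemma F2_ON: "j \<noteq> t \<Longrightarrow> ON j \<in> F2 t"
  unfolding F2_def rhs2_def using inPt[OF ON_in] sum2_from[OF t, of 1, unfolded w_def] t tT2
  by (auto simp: ON_def ind_def)

lemma F2_SDa: "k < t \<Longrightarrow> SD k 0 \<in> F2 t"
  unfolding F2_def rhs2_def using inPt[OF SD_in[of k 0]] sum2_to[OF t, of k, unfolded w_def] t tT2 V0 VbV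
  by (auto simp: SD_def ind_def)

lemma F2_SDb: "s \<in> S \<Longrightarrow> SD (t + s) s \<in> F2 t"
proof -
  assume s: "s \<in> S"
  then have ss: "s \<le> smax" using S_sub by auto
  have inK: "SD (t + s) s \<in> KK" using inPt[OF SD_in[of "t + s" s]] ss tT2 sV[OF s] by auto
  show ?thesis
    unfolding F2_def rhs2_def using inK sum2_to[OF t, of "t + s", unfolded w_def] ss t tT2 s
    by (auto simp: SD_def ind_def)
qed

lemma F2_SU: "t < m \<Longrightarrow> m \<le> T + 1 \<Longrightarrow> m - t - 1 \<notin> S \<Longrightarrow> SU m 0 \<in> F2 t"
  unfolding F2_def rhs2_def using inPt[OF SU_in[of m 0]] sum2_from[OF t, of m, unfolded w_def] t V0 VbV
  by (auto simp: SU_def ind_def)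

lemma F2_span_snd:
  assumes q: "q \<in> F2 t"
  shows "snd q \<in> span (snd ` {a - b |a b. a \<in> F2 t \<and> b \<in> F2 t})"
proof -
  have "T + 1 - t - 1 \<notin> S" using S_sub tT2 by auto
  then have z: "SU (T + 1) 0 \<in> F2 t" using F2_SU t tT2 by simp
  have "q - SU (T + 1) 0 \<in> {a - b |a b. a \<in> F2 t \<and> b \<in> F2 t}" using q z by blast
  then have "snd (q - SU (T + 1) 0) \<in> snd ` {a - b |a b. a \<in> F2 t \<and> b \<in> F2 t}" by blast
  then show ?thesis unfolding ZERO by (simp add: real_vector.span_base)
qed

lemma F2_hy:
  assumes k: "k \<in> {1..T}"
  shows "\<exists>d\<in>span {a - b |a b. a \<in> F2 t \<and> b \<in> F2 t}. snd d = ev k"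
proof -
  define Y where "Y = span (snd ` {a - b |a b. a \<in> F2 t \<and> b \<in> F2 t})"
  have top: "ind 1 T \<in> Y" using F2_span_snd[OF F2_ON[of 0]] t unfolding Y_def by (simp add: ON_def)
  have im: "ind m T \<in> Y" if m: "1 \<le> m" "m \<le> T + 1" for m
  proof (cases "m \<le> t \<or> m - t - 1 \<in> S")
    case True
    have "\<exists>n. SD (m - 1) n \<in> F2 t"
    proof (cases "m \<le> t")
      case True
      then have "m - 1 < t" using m by simp
      then show ?thesis using F2_SDa[of "m - 1"] by blast
    next
      case False
      then have "m - t - 1 \<in> S" using \<open>m \<le> t \<or> m - t - 1 \<in> S\<close> by simp
      moreover have "t + (m - t - 1) = m - 1" using False by simp
      ultimately show ?thesis using F2_SDb[of "m - t - 1"] by metis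
    qed
    then obtain n where "SD (m - 1) n \<in> F2 t" by blast
    then have "ind 1 (m - 1) \<in> Y"
      using F2_span_snd unfolding Y_def SD_def by auto
    then show ?thesis unfolding ind_split2[OF m] using top unfolding Y_def
      by (intro real_vector.span_diff)
  next
    case False
    then have "SU m 0 \<in> F2 t" using F2_SU m by simp
    then show ?thesis using F2_span_snd unfolding Y_def SU_def by auto
  qed
  have e: "ev k = ind k T - ind (k + 1) T" using k by (intro ind_ev2) auto
  have a1: "ind k T \<in> Y" "ind (k + 1) T \<in> Y" using k im by auto
  have "ev k \<in> Y" unfolding e using a1 unfolding Y_def
    by (intro real_vector.span_diff)
  then have "ev k \<in> snd ` span {a - b |a b. a \<in> F2 t \<and> b \<in> F2 t}"
    unfolding Y_def real_vector.linear_span_image[OF real_vector.linear_snd] .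
  then show ?thesis by force
qed

end

lemma facet2:
  assumes t: "t \<in> {1..T - smax - 1}"
  shows "facet_defining KK (\<lambda>p. fst p t) (rhs2 t)"
proof -
  define h where "h p = fst p t - rhs2 t p" for p
  have lin: "linear h" unfolding h_def rhs2_def by (rule linear_rhs_gen)
  have val: "\<forall>p\<in>KK. fst p t \<le> rhs2 t p"
  proof
    fix p assume "p \<in> KK"
    have "h p \<le> 0"
    proof (rule valid_hull[OF lin])
      show "p \<in> convex hull Pt" using \<open>p \<in> KK\<close> unfolding KK_def .
    next
      fix q assume "q \<in> Pt"
      then show "h q \<le> 0" unfolding h_def rhs2_def Pt_def Pset_def using valid2[OF _ t] by auto
    qed
    then show "fst p t \<le> rhs2 t p" unfolding h_def by simp
  qed
  have t1: "t \<in> {1..T}" using t by auto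
  have gx: "h (exv i) = (if i = t then 1 else 0)" for i
    unfolding h_def rhs2_def exv_def ev_def by auto
  have F2K: "F2 t \<subseteq> KK" unfolding F2_def by auto
  have Fg: "h p = 0" if "p \<in> F2 t" for p using that unfolding F2_def h_def by auto
  have Fne: "F2 t \<noteq> {}" using F2_ON[OF t, of 0] t by auto
  have hx: "exv i \<in> span {a - b |a b. a \<in> F2 t \<and> b \<in> F2 t}" if "i \<in> {1..T}" "i \<noteq> t" for i
    using exv_span[OF F2_ON[OF t, of 0] F2_ON[OF t, of i]] that t by auto
  have hxt: "exv t \<in> span {a - b |a b. a \<in> KK \<and> b \<in> KK}"
    using exv_span[OF inPt[OF ON_in] inPt[OF ON_in] t1] .
  note D = dims[OF T0 t1 lin gx KW F2K Fg Fne hx hxt F2_hy[OF t]]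
  show ?thesis unfolding facet_defining_def valid_ineq_def
    using val D unfolding F2_def by simp
qed

end

theorem proposition2:
  fixes T L l :: nat and Cb Cu V Vb :: real and \<alpha> \<beta> smax :: nat
  assumes "T > 0" "L > 0" "l > 0"
    and "Cb > Cu" "Cu > 0" "V > 0" "Vb + V \<le> Cb" "Cu < Vb" "Vb < Cu + V"
    and "L \<le> smax" "int smax \<le> int T - 2" "int smax \<le> \<lfloor>(Cb - Vb) / V\<rfloor>"
    and "\<alpha> < \<beta>" "\<beta> \<le> smax"
    and "\<beta> = \<alpha> + 1 \<or> smax \<le> L + \<alpha>"
  defines "S \<equiv> {0..\<alpha>} \<union> {\<beta>..smax}"
    and "K \<equiv> convex hull (Pset T L l Cb Cu V Vb)"
  shows "(\<forall>t\<in>{smax + 2..T}.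
           facet_defining K (\<lambda>p. fst p t)
             (\<lambda>p. Cb * snd p t - (\<Sum>s\<in>S. (Cb - Vb - real s * V) * (snd p (t - s) - snd p (t - s - 1)))))
       \<and> (\<forall>t\<in>{1..T - smax - 1}.
           facet_defining K (\<lambda>p. fst p t)
             (\<lambda>p. Cb * snd p t - (\<Sum>s\<in>S. (Cb - Vb - real s * V) * (snd p (t + s) - snd p (t + s + 1)))))"
proof -
  interpret st: setting T L l Cb Cu V Vb \<alpha> \<beta> smax
    by (unfold_locales) (use assms(1-15) in auto)
  have KK: "st.KK = K" unfolding st.KK_def st.Pt_def K_def ..
  have SS: "st.S = S" unfolding st.S_def S_def ..
  have r1: "st.rhs1 t = (\<lambda>p. Cb * snd p t - (\<Sum>s\<in>S. (Cb - Vb - real s * V) * (snd p (t - s) - snd p (t - s - 1))))" for t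
    by (simp add: fun_eq_iff st.rhs1_def SS)
  have r2: "st.rhs2 t = (\<lambda>p. Cb * snd p t - (\<Sum>s\<in>S. (Cb - Vb - real s * V) * (snd p (t + s) - snd p (t + s + 1))))" for t
    by (simp add: fun_eq_iff st.rhs2_def SS)
  show ?thesis
    using st.facet1 st.facet2 unfolding KK r1 r2 by blast
qed

end
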